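(* In the Nakagami model with parameters $L_c>0$, $L_s>0$, the expected distortion of uncoded transmission, $ED_u(\rho)=\mathrm E\!\left[\frac{1}{1+H+\Gamma}\right]$, satisfies $$\lim_{\rho\to\infty}-\frac{\log ED_u(\rho)}{\log\rho}=\min\{L_s+L_c,1\}.$$
   Context: Nakagami model: for SNR $\rho>0$, $H=\rho H_0$ and $\Gamma=\rho\Gamma_0$, where $H_0,\Gamma_0$ are independent, $H_0$ is Gamma distributed with shape $L_c$ and scale $1/L_c$, and $\Gamma_0$ is Gamma distributed with shape $L_s$ and scale $1/L_s$ (Gamma$(L,\theta)$ density $\frac{1}{\theta^L\Gamma(L)}x^{L-1}e^{-x/\theta}$, $x\ge0$). *)

theory Defs
  imports "HOL-Probability.Probability"
begin

definition gamma_density :: "real \<Rightarrow> real \<Rightarrow> real \<Rightarrow> real" where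
  "gamma_density L \<theta> x =
     (if x < 0 then 0 else x powr (L - 1) * exp (- x / \<theta>) / (\<theta> powr L * Gamma L))"

end

theory Submission imports Defs begin

lemma indep_lborel:
  assumes "prob_space M" "prob_space.indep_var M borel X borel Y"
  shows "prob_space.indep_var M lborel X lborel Y"
proof -
  interpret prob_space M by fact
  have m: "measurable M lborel = measurable M borel" by (rule measurable_cong_sets) auto
  show ?thesis using assms(2) unfolding indep_var_eq m by simp
qed

lemma gd_eq: "L > 0 \<Longrightarrow> gamma_density L (1/L) x =
   (if x < 0 then 0 else x powr (L-1) * exp (-(L*x)) * (L powr L / Gamma L))"
  by (simp add: gamma_density_def powr_divide field_simps)

lemma gd_meas[measurable]: "gamma_density L t \<in> borel_measurable borel"
  unfolding gamma_density_def by measurable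

lemma gd_nonneg: "L > 0 \<Longrightarrow> 0 \<le> gamma_density L (1/L) x"
  by (simp add: gd_eq)

lemma gd_zero: "L > 0 \<Longrightarrow> x \<le> 0 \<Longrightarrow> gamma_density L (1/L) x = 0"
  by (simp add: gd_eq)

lemma powint:
  assumes "a > 0" "s \<ge> 0"
  shows "(\<integral>\<^sup>+x. ennreal (x powr (a-1)) * indicator {0..s} x \<partial>lborel) = ennreal (s powr a / a)"
proof -
  have "((\<lambda>x. x powr (a-1)) has_integral (s powr (a-1+1) / (a-1+1))) {0..s}"
    by (rule has_integral_powr_from_0) (use assms in auto)
  then show ?thesis
    by (subst nn_integral_has_integral_lebesgue') auto
qed

lemma nn_prod:
  assumes [measurable]: "F \<in> borel_measurable lborel" "G \<in> borel_measurable lborel"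
  shows "(\<integral>\<^sup>+z. F (fst z) * G (snd z) \<partial>(lborel \<Otimes>\<^sub>M lborel)) =
     (\<integral>\<^sup>+x. F x \<partial>lborel) * (\<integral>\<^sup>+y. G y \<partial>lborel)"
proof -
  have "(\<integral>\<^sup>+z. F (fst z) * G (snd z) \<partial>(lborel \<Otimes>\<^sub>M lborel)) =
     (\<integral>\<^sup>+x. \<integral>\<^sup>+y. F x * G y \<partial>lborel \<partial>lborel)"
    by (subst lborel.nn_integral_fst[symmetric]) auto
  also have "\<dots> = (\<integral>\<^sup>+x. F x * (\<integral>\<^sup>+y. G y \<partial>lborel) \<partial>lborel)"
    by (simp add: nn_integral_cmult)
  also have "\<dots> = (\<integral>\<^sup>+x. F x \<partial>lborel) * (\<integral>\<^sup>+y. G y \<partial>lborel)"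
    by (simp add: nn_integral_multc)
  finally show ?thesis .
qed

lemma real_bound:
  fixes \<rho> x y a p q :: real
  assumes "\<rho> > 0" "x > 0" "y > 0" "0 \<le> a" "a \<le> 1" "p \<ge> 0" "q \<ge> 0" "p + q = a"
  shows "1 / (1 + \<rho> * x + \<rho> * y) \<le> \<rho> powr (-a) * x powr (-p) * y powr (-q)"
proof -
  define t where "t = \<rho> * (x + y)"
  have t: "t > 0" using assms by (simp add: t_def)
  have "t powr a \<le> 1 + t"
  proof (cases "t \<ge> 1")
    case True
    then have "t powr a \<le> t powr 1" by (intro powr_mono) (use assms in auto)
    then show ?thesis using t by simp
  next
    case False
    then have "t powr a \<le> 1" by (intro powr_le1) (use assms t in auto)
    then show ?thesis using t by simp
  qed
  have xy: "x powr p * y powr q \<le> (x + y) powr a"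
  proof -
    have "x powr p \<le> (x+y) powr p" by (rule powr_mono2) (use assms in auto)
    moreover have "y powr q \<le> (x+y) powr q" by (rule powr_mono2) (use assms in auto)
    ultimately have "x powr p * y powr q \<le> (x+y) powr p * (x+y) powr q"
      by (intro mult_mono) auto
    also have "\<dots> = (x+y) powr a" using assms by (simp add: powr_add[symmetric])
    finally show ?thesis .
  qed
  have pos: "0 < \<rho> powr a * (x powr p * y powr q)" using assms by simp
  have "\<rho> powr a * (x powr p * y powr q) \<le> \<rho> powr a * (x+y) powr a"
    using xy assms by (intro mult_left_mono) auto
  also have "\<dots> = t powr a" using assms by (simp add: t_def powr_mult)
  also have "\<dots> \<le> 1 + \<rho> * x + \<rho> * y" using \<open>t powr a \<le> 1 + t\<close> by (simp add: t_def algebra_simps)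
  finally have le: "\<rho> powr a * (x powr p * y powr q) \<le> 1 + \<rho> * x + \<rho> * y" .
  have "1 / (1 + \<rho> * x + \<rho> * y) \<le> 1 / (\<rho> powr a * (x powr p * y powr q))"
  proof (rule divide_left_mono[OF le])
    have "0 < 1 + \<rho> * x + \<rho> * y" using assms by (simp add: add_pos_pos)
    then show "0 < (1 + \<rho> * x + \<rho> * y) * (\<rho> powr a * (x powr p * y powr q))"
      using pos by simp
  qed simp
  also have "\<dots> = \<rho> powr (-a) * x powr (-p) * y powr (-q)"
    using assms by (simp add: powr_minus field_simps)
  finally show ?thesis .
qed

lemma gd_upper: "L > 0 \<Longrightarrow> gamma_density L (1/L) x \<le> (L powr L / Gamma L) * x powr (L-1)"
proof -
  assume L: "L > 0"
  show ?thesis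
  proof (cases "x < 0")
    case True then show ?thesis using L by (simp add: gd_eq)
  next
    case False
    have e: "exp (-(L*x)) \<le> 1" using L False by simp
    have "x powr (L-1) * exp (-(L*x)) * (L powr L / Gamma L) \<le> x powr (L-1) * 1 * (L powr L / Gamma L)"
      using L e by (intro mult_right_mono mult_left_mono) auto
    then show ?thesis using False L by (simp add: gd_eq mult.commute)
  qed
qed

lemma gd_lower: "L > 0 \<Longrightarrow> 0 \<le> x \<Longrightarrow> x \<le> 1 \<Longrightarrow>
   gamma_density L (1/L) x \<ge> (exp (-L) * L powr L / Gamma L) * x powr (L-1)"
proof -
  assume L: "L > 0" and x: "0 \<le> x" "x \<le> 1"
  have "exp (-L) \<le> exp (-(L*x))" using L x by (simp add: mult_left_le)
  then have "exp (-L) * (x powr (L-1) * (L powr L / Gamma L)) \<le> exp (-(L*x)) * (x powr (L-1) * (L powr L / Gamma L))"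
    by (rule mult_right_mono) (use L in simp)
  then show ?thesis using x L by (simp add: gd_eq mult_ac)
qed

lemma cdf_lower:
  assumes L: "L > 0" and s: "0 \<le> s" "s \<le> 1"
  shows "ennreal ((exp (-L) * L powr L / Gamma L) * (s powr L / L)) \<le>
     (\<integral>\<^sup>+x. ennreal (gamma_density L (1/L) x) * indicator {..s} x \<partial>lborel)"
proof -
  define K where "K = exp (-L) * L powr L / Gamma L"
  have K: "K \<ge> 0" using L by (simp add: K_def)
  have "ennreal (K * (s powr L / L)) = ennreal K * (\<integral>\<^sup>+x. ennreal (x powr (L-1)) * indicator {0..s} x \<partial>lborel)"
    unfolding powint[OF L s(1)] by (rule ennreal_mult) (use K L s in auto)
  also have "\<dots> = (\<integral>\<^sup>+x. ennreal K * (ennreal (x powr (L-1)) * indicator {0..s} x) \<partial>lborel)"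
    by (rule nn_integral_cmult[symmetric]) measurable
  also have "\<dots> \<le> (\<integral>\<^sup>+x. ennreal (gamma_density L (1/L) x) * indicator {..s} x \<partial>lborel)"
  proof (rule nn_integral_mono)
    fix x
    show "ennreal K * (ennreal (x powr (L-1)) * indicator {0..s} x) \<le> ennreal (gamma_density L (1/L) x) * indicator {..s} x"
    proof (cases "x \<in> {0..s}")
      case True
      then have "K * x powr (L-1) \<le> gamma_density L (1/L) x"
        using gd_lower[OF L, of x] s unfolding K_def by auto
      then have "ennreal (K * x powr (L-1)) \<le> ennreal (gamma_density L (1/L) x)" by (rule ennreal_leI)
      then show ?thesis using True K by (simp add: ennreal_mult)
    qed simp
  qed
  finally show ?thesis unfolding K_def .
qed

lemma total_one:
  assumes "prob_space M" "distributed M lborel X (\<lambda>x. ennreal (f x))"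
  shows "(\<integral>\<^sup>+x. ennreal (f x) \<partial>lborel) = 1"
proof -
  interpret prob_space M by fact
  have "emeasure M (X -` UNIV \<inter> space M) = (\<integral>\<^sup>+x. ennreal (f x) * indicator UNIV x \<partial>lborel)"
    by (rule distributed_emeasure[OF assms(2)]) simp
  moreover have "X -` UNIV \<inter> space M = space M" by blast
  moreover have "(\<lambda>x. ennreal (f x) * indicator UNIV x) = (\<lambda>x. ennreal (f x))" by (rule ext) simp
  ultimately show ?thesis using emeasure_space_1 by simp
qed

lemma moment_upper:
  assumes L: "L > 0" and p: "0 \<le> p" "p < L" and "prob_space M"
    and d: "distributed M lborel X (\<lambda>x. ennreal (gamma_density L (1/L) x))"
  shows "(\<integral>\<^sup>+x. ennreal (gamma_density L (1/L) x) * ennreal (x powr (-p)) \<partial>lborel) \<le>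
     ennreal ((L powr L / Gamma L) / (L - p) + 1)"
proof -
  define K where "K = L powr L / Gamma L"
  have K: "K \<ge> 0" using L by (simp add: K_def)
  have "(\<integral>\<^sup>+x. ennreal (gamma_density L (1/L) x) * ennreal (x powr (-p)) \<partial>lborel) \<le>
     (\<integral>\<^sup>+x. ennreal K * (ennreal (x powr ((L-p)-1)) * indicator {0..1} x) + ennreal (gamma_density L (1/L) x) \<partial>lborel)"
  proof (rule nn_integral_mono)
    fix x
    have gdn: "0 \<le> gamma_density L (1/L) x" by (rule gd_nonneg[OF L])
    have lhs: "ennreal (gamma_density L (1/L) x) * ennreal (x powr (-p)) = ennreal (gamma_density L (1/L) x * x powr (-p))"
      by (rule ennreal_mult[symmetric]) (use gdn in auto)
    show "ennreal (gamma_density L (1/L) x) * ennreal (x powr (-p)) \<le>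
       ennreal K * (ennreal (x powr ((L-p)-1)) * indicator {0..1} x) + ennreal (gamma_density L (1/L) x)"
    proof (cases "x \<le> 0")
      case True then show ?thesis using L by (simp add: gd_zero)
    next
      case False
      show ?thesis
      proof (cases "x \<le> 1")
        case True
        have "gamma_density L (1/L) x * x powr (-p) \<le> K * x powr (L-1) * x powr (-p)"
          using gd_upper[OF L, of x] unfolding K_def by (intro mult_right_mono) auto
        also have "\<dots> = K * x powr ((L-p)-1)" using False by (simp add: powr_add[symmetric] diff_diff_eq add.commute)
        finally have le: "ennreal (gamma_density L (1/L) x * x powr (-p)) \<le> ennreal (K * x powr ((L-p)-1))"
          by (rule ennreal_leI)
        have r: "ennreal K * (ennreal (x powr ((L-p)-1)) * indicator {0..1} x) = ennreal (K * x powr ((L-p)-1))"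
          using True False K by (simp add: ennreal_mult)
        show ?thesis unfolding lhs r using le by (rule add_increasing2[rotated]) simp
      next
        case False2: False
        have "1 \<le> x powr p" by (rule ge_one_powr_ge_zero) (use False2 p in auto)
        then have "x powr (-p) \<le> 1" by (simp add: powr_minus inverse_le_1_iff)
        then have "gamma_density L (1/L) x * x powr (-p) \<le> gamma_density L (1/L) x"
          using gdn by (simp add: mult_left_le)
        then have "ennreal (gamma_density L (1/L) x * x powr (-p)) \<le> ennreal (gamma_density L (1/L) x)"
          by (rule ennreal_leI)
        then show ?thesis unfolding lhs by (rule add_increasing[rotated]) simp
      qed
    qed
  qed
  also have "\<dots> = ennreal K * (\<integral>\<^sup>+x. ennreal (x powr ((L-p)-1)) * indicator {0..1} x \<partial>lborel) + (\<integral>\<^sup>+x. ennreal (gamma_density L (1/L) x) \<partial>lborel)"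
    by (subst nn_integral_add) (auto simp: nn_integral_cmult)
  also have "\<dots> = ennreal K * ennreal (1 / (L - p)) + 1"
    using p by (simp add: powint total_one[OF assms(4) d])
  also have "\<dots> = ennreal (K / (L - p) + 1)"
  proof -
    have "ennreal (K / (L - p) + 1) = ennreal (K / (L - p)) + ennreal 1"
      by (rule ennreal_plus) (use K p in auto)
    moreover have "ennreal (K / (L - p)) = ennreal K * ennreal (1 / (L - p))"
      using ennreal_mult[of K "1/(L-p)"] K p by simp
    ultimately show ?thesis by simp
  qed
  finally show ?thesis unfolding K_def .
qed

lemma AE_nonneg:
  assumes "prob_space M" "L > 0"
    and d: "distributed M lborel X (\<lambda>x. ennreal (gamma_density L (1/L) x))"
  shows "AE \<omega> in M. 0 \<le> X \<omega>"
proof -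
  have X[measurable]: "X \<in> measurable M lborel" using d by (rule distributed_measurable)
  have "AE x in density lborel (\<lambda>x. ennreal (gamma_density L (1/L) x)). 0 \<le> x"
    by (subst AE_density) (auto intro!: AE_I2 simp: gd_zero[OF assms(2)] not_le intro: ccontr)
  then have "AE x in distr M lborel X. 0 \<le> x"
    unfolding distributed_distr_eq_density[OF d] .
  then show ?thesis by (rule AE_distrD[OF X])
qed

theorem lemma7:
  fixes M :: "'a measure" and H0 \<Gamma>0 :: "'a \<Rightarrow> real" and Lc Ls :: real
  assumes "prob_space M"
    and "Lc > 0" and "Ls > 0"
    and "prob_space.indep_var M borel H0 borel \<Gamma>0"
    and "distributed M lborel H0 (\<lambda>x. ennreal (gamma_density Lc (1 / Lc) x))"
    and "distributed M lborel \<Gamma>0 (\<lambda>x. ennreal (gamma_density Ls (1 / Ls) x))"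
  shows "((\<lambda>\<rho>::real. - ln (prob_space.expectation M
              (\<lambda>\<omega>. 1 / (1 + \<rho> * H0 \<omega> + \<rho> * \<Gamma>0 \<omega>))) / ln \<rho>)
          \<longlongrightarrow> min (Ls + Lc) 1) at_top"
proof -
  interpret P: prob_space M by fact
  note Lc = \<open>Lc > 0\<close> and Ls = \<open>Ls > 0\<close>
  define fX where "fX x = ennreal (gamma_density Lc (1/Lc) x)" for x
  define fY where "fY y = ennreal (gamma_density Ls (1/Ls) y)" for y
  have fXm[measurable]: "fX \<in> borel_measurable lborel" unfolding fX_def by measurable
  have fYm[measurable]: "fY \<in> borel_measurable lborel" unfolding fY_def by measurable
  have fX0: "x \<le> 0 \<Longrightarrow> fX x = 0" for x using Lc by (simp add: fX_def gd_zero)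
  have fY0: "y \<le> 0 \<Longrightarrow> fY y = 0" for y using Ls by (simp add: fY_def gd_zero)
  define m where "m = min (Ls + Lc) 1"
  define L where "L = Lc + Ls"
  have L: "L > 0" using Lc Ls by (simp add: L_def)
  have m: "m > 0" using Lc Ls by (simp add: m_def)
  have XM[measurable]: "H0 \<in> measurable M lborel" using assms(5) by (rule distributed_measurable)
  have YM[measurable]: "\<Gamma>0 \<in> measurable M lborel" using assms(6) by (rule distributed_measurable)
  have XB[measurable]: "H0 \<in> borel_measurable M" using XM by simp
  have YB[measurable]: "\<Gamma>0 \<in> borel_measurable M" using YM by simp
  have ind: "P.indep_var lborel H0 lborel \<Gamma>0" by (rule indep_lborel[OF assms(1,4)])
  have joint: "distributed M (lborel \<Otimes>\<^sub>M lborel) (\<lambda>\<omega>. (H0 \<omega>, \<Gamma>0 \<omega>)) (\<lambda>(x,y). fX x * fY y)"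
    unfolding fX_def fY_def
    by (rule P.distributed_joint_indep[OF _ _ assms(5) assms(6) ind]) (rule lborel.sigma_finite_measure_axioms)+
  define N where "N \<rho> = (\<integral>\<^sup>+\<omega>. ennreal (1 / (1 + \<rho> * H0 \<omega> + \<rho> * \<Gamma>0 \<omega>)) \<partial>M)" for \<rho>
  have Nj: "N \<rho> = (\<integral>\<^sup>+z. (fX (fst z) * fY (snd z)) * ennreal (1 / (1 + \<rho> * fst z + \<rho> * snd z)) \<partial>(lborel \<Otimes>\<^sub>M lborel))" for \<rho>
  proof -
    have g: "(\<lambda>z::real\<times>real. ennreal (1 / (1 + \<rho> * fst z + \<rho> * snd z))) \<in> borel_measurable (lborel \<Otimes>\<^sub>M lborel)"
      by measurable
    show ?thesis
      using distributed_nn_integral[OF joint g] unfolding N_def by (simp add: case_prod_beta)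
  qed
  have AEX: "AE \<omega> in M. 0 \<le> H0 \<omega>" by (rule AE_nonneg[OF assms(1) Lc assms(5)])
  have AEY: "AE \<omega> in M. 0 \<le> \<Gamma>0 \<omega>" by (rule AE_nonneg[OF assms(1) Ls assms(6)])
  have E_eq: "prob_space.expectation M (\<lambda>\<omega>. 1 / (1 + \<rho> * H0 \<omega> + \<rho> * \<Gamma>0 \<omega>)) = enn2real (N \<rho>)"
    if "\<rho> \<ge> 0" for \<rho>
    unfolding N_def
  proof (rule integral_eq_nn_integral)
    show "(\<lambda>\<omega>. 1 / (1 + \<rho> * H0 \<omega> + \<rho> * \<Gamma>0 \<omega>)) \<in> borel_measurable M" by measurable
    show "AE \<omega> in M. 0 \<le> 1 / (1 + \<rho> * H0 \<omega> + \<rho> * \<Gamma>0 \<omega>)"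
      using AEX AEY by eventually_elim (use that in auto)
  qed

  define kX where "kX = exp (-Lc) * Lc powr Lc / Gamma Lc"
  define kY where "kY = exp (-Ls) * Ls powr Ls / Gamma Ls"
  have kX: "kX > 0" using Lc by (simp add: kX_def)
  have kY: "kY > 0" using Ls by (simp add: kY_def)
  have low: "ennreal (1 / (1 + 2 * \<rho> * s) * (kX * (s powr Lc / Lc)) * (kY * (s powr Ls / Ls))) \<le> N \<rho>"
    if \<rho>: "\<rho> > 0" and s: "0 \<le> s" "s \<le> 1" for \<rho> s
  proof -
    define c where "c = 1 / (1 + 2 * \<rho> * s)"
    have "0 \<le> 2 * \<rho> * s" using \<rho> s by simp
    then have c: "c > 0" by (simp add: c_def add_pos_nonneg)
    have "ennreal (c * (kX * (s powr Lc / Lc)) * (kY * (s powr Ls / Ls))) =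
       ennreal c * ennreal (kX * (s powr Lc / Lc)) * ennreal (kY * (s powr Ls / Ls))"
    proof -
      have A: "0 \<le> kX * (s powr Lc / Lc)" "0 \<le> kY * (s powr Ls / Ls)" using kX kY Lc Ls by auto
      have e1: "ennreal (c * (kX * (s powr Lc / Lc)) * (kY * (s powr Ls / Ls))) = ennreal (c * (kX * (s powr Lc / Lc))) * ennreal (kY * (s powr Ls / Ls))"
        by (rule ennreal_mult) (use A c in \<open>auto intro!: mult_nonneg_nonneg simp del: times_divide_eq_right\<close>)
      have e2: "ennreal (c * (kX * (s powr Lc / Lc))) = ennreal c * ennreal (kX * (s powr Lc / Lc))"
        by (rule ennreal_mult) (use A c in auto)
      show ?thesis by (simp only: e1 e2)
    qed
    also have "\<dots> \<le> ennreal c * (\<integral>\<^sup>+x. fX x * indicator {..s} x \<partial>lborel) * (\<integral>\<^sup>+y. fY y * indicator {..s} y \<partial>lborel)"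
      unfolding fX_def fY_def kX_def kY_def
      by (intro mult_mono cdf_lower Lc Ls s) auto
    also have "\<dots> = ennreal c * (\<integral>\<^sup>+z. (fX (fst z) * indicator {..s} (fst z)) * (fY (snd z) * indicator {..s} (snd z)) \<partial>(lborel \<Otimes>\<^sub>M lborel))"
      by (subst nn_prod) (auto simp: mult.assoc)
    also have "\<dots> = (\<integral>\<^sup>+z. ennreal c * ((fX (fst z) * indicator {..s} (fst z)) * (fY (snd z) * indicator {..s} (snd z))) \<partial>(lborel \<Otimes>\<^sub>M lborel))"
      by (rule nn_integral_cmult[symmetric]) measurable
    also have "\<dots> \<le> N \<rho>"
      unfolding Nj
    proof (rule nn_integral_mono)
      fix z :: "real \<times> real"
      obtain x y where z: "z = (x, y)" by (cases z)
      show "ennreal c * ((fX (fst z) * indicator {..s} (fst z)) * (fY (snd z) * indicator {..s} (snd z)))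
          \<le> (fX (fst z) * fY (snd z)) * ennreal (1 / (1 + \<rho> * fst z + \<rho> * snd z))"
      proof (cases "x \<le> 0 \<or> y \<le> 0 \<or> x > s \<or> y > s")
        case True then show ?thesis using fX0 fY0 by (auto simp: z)
      next
        case False
        then have xy: "0 < x" "x \<le> s" "0 < y" "y \<le> s" by auto
        have "\<rho> * x \<le> \<rho> * s" "\<rho> * y \<le> \<rho> * s" using xy \<rho> by (auto intro!: mult_left_mono)
        then have le: "1 + \<rho> * x + \<rho> * y \<le> 1 + 2 * \<rho> * s" by simp
        have pos: "0 < 1 + \<rho> * x + \<rho> * y" using xy \<rho> by (simp add: add_pos_pos)
        have "c \<le> 1 / (1 + \<rho> * x + \<rho> * y)" unfolding c_def
          using le pos by (intro divide_left_mono) auto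
        then have "ennreal c \<le> ennreal (1 / (1 + \<rho> * x + \<rho> * y))" by (rule ennreal_leI)
        then have "ennreal c * (fX x * fY y) \<le> ennreal (1 / (1 + \<rho> * x + \<rho> * y)) * (fX x * fY y)"
          by (rule mult_right_mono) simp
        then show ?thesis using xy by (simp add: z mult_ac)
      qed
    qed
    finally show ?thesis unfolding c_def .
  qed
  have N1: "N \<rho> \<le> 1" if \<rho>: "\<rho> \<ge> 0" for \<rho>
  proof -
    have "N \<rho> \<le> (\<integral>\<^sup>+z. fX (fst z) * fY (snd z) \<partial>(lborel \<Otimes>\<^sub>M lborel))"
      unfolding Nj
    proof (rule nn_integral_mono)
      fix z :: "real \<times> real"
      show "fX (fst z) * fY (snd z) * ennreal (1 / (1 + \<rho> * fst z + \<rho> * snd z)) \<le> fX (fst z) * fY (snd z)"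
      proof (cases "fst z \<le> 0 \<or> snd z \<le> 0")
        case True then show ?thesis using fX0 fY0 by auto
      next
        case False
        then have t: "0 \<le> \<rho> * fst z + \<rho> * snd z" using \<rho> by simp
        then have "1 / (1 + \<rho> * fst z + \<rho> * snd z) \<le> 1" by (simp add: field_simps)
        then have "ennreal (1 / (1 + \<rho> * fst z + \<rho> * snd z)) \<le> ennreal 1" by (rule ennreal_leI)
        then have "fX (fst z) * fY (snd z) * ennreal (1 / (1 + \<rho> * fst z + \<rho> * snd z)) \<le> fX (fst z) * fY (snd z) * 1"
          by (intro mult_left_mono) auto
        then show ?thesis by simp
      qed
    qed
    also have "\<dots> = 1"
      using total_one[OF assms(1) assms(5)] total_one[OF assms(1) assms(6)]
      by (subst nn_prod) (auto simp: fX_def[abs_def] fY_def[abs_def])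
    finally show ?thesis .
  qed
  have Ntop: "N \<rho> < top" if "\<rho> \<ge> 0" for \<rho>
    using N1[OF that] by (rule le_less_trans) simp
  have lowb: "\<exists>c>0. \<forall>\<rho>\<ge>1. c * \<rho> powr (-m) \<le> enn2real (N \<rho>)"
  proof -
    define k where "k = kX * kY / (Lc * Ls)"
    have k: "k > 0" using kX kY Lc Ls by (simp add: k_def)
    define c where "c = k * min (2 powr (-L) / 2) (1/3)"
    have c: "c > 0" using k by (simp add: c_def)
    have val: "1 / (1 + 2 * \<rho> * s) * (kX * (s powr Lc / Lc)) * (kY * (s powr Ls / Ls)) = k * (1/(1 + 2 * \<rho> * s)) * s powr L" for \<rho> s
      unfolding k_def L_def by (simp add: powr_add field_simps)
    have "c * \<rho> powr (-m) \<le> enn2real (N \<rho>)" if \<rho>: "\<rho> \<ge> 1" for \<rho>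
    proof -
      have lowv: "k * (1/(1 + 2 * \<rho> * s)) * s powr L \<le> enn2real (N \<rho>)" if s: "0 \<le> s" "s \<le> 1" for s
      proof -
        have "ennreal (k * (1/(1 + 2 * \<rho> * s)) * s powr L) \<le> N \<rho>" using low[of \<rho> s] \<rho> s unfolding val by simp
        then have "enn2real (ennreal (k * (1/(1 + 2 * \<rho> * s)) * s powr L)) \<le> enn2real (N \<rho>)"
          by (rule enn2real_mono) (rule Ntop, use \<rho> in simp)
        moreover have "0 \<le> k * (1/(1 + 2 * \<rho> * s)) * s powr L" using k s \<rho> by simp
        ultimately show ?thesis by simp
      qed
      show ?thesis
      proof (cases "Ls + Lc \<le> 1")
        case True
        then have mL: "m = L" unfolding m_def L_def by simp
        have s: "0 \<le> 1/(2 * \<rho>)" "1/(2 * \<rho>) \<le> 1" using \<rho> by auto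
        have pw: "(1/(2 * \<rho>)) powr L = 2 powr (-L) * \<rho> powr (-L)"
          using \<rho> by (simp add: powr_divide powr_mult powr_minus_divide)
        have h: "1/(1 + 2 * \<rho> * (1/(2 * \<rho>))) = 1/2" using \<rho> by simp
        have "c * \<rho> powr (-m) \<le> (k * (2 powr (-L) / 2)) * \<rho> powr (-L)"
          unfolding mL c_def by (intro mult_right_mono mult_left_mono) (use k in auto)
        also have "\<dots> = k * (1/(1 + 2 * \<rho> * (1/(2 * \<rho>)))) * (1/(2 * \<rho>)) powr L"
          unfolding h pw by simp
        also have "\<dots> \<le> enn2real (N \<rho>)" by (rule lowv[OF s])
        finally show ?thesis .
      next
        case False
        then have m1: "m = 1" unfolding m_def by simp
        have "c * \<rho> powr (-m) \<le> (k * (1/3)) * \<rho> powr (-1)"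
          unfolding m1 c_def by (intro mult_right_mono mult_left_mono) (use k in auto)
        also have "\<dots> = k * (1 / (3 * \<rho>))" using \<rho> by (simp add: powr_minus_divide)
        also have "\<dots> \<le> k * (1/(1 + 2 * \<rho> * 1))"
          using \<rho> k by (intro mult_left_mono divide_left_mono) auto
        also have "\<dots> = k * (1/(1 + 2 * \<rho> * 1)) * 1 powr L" by simp
        also have "\<dots> \<le> enn2real (N \<rho>)" by (rule lowv) auto
        finally show ?thesis .
      qed
    qed
    then show ?thesis using c by blast
  qed
  have upb: "\<exists>C>0. \<forall>\<rho>\<ge>1. enn2real (N \<rho>) \<le> C * \<rho> powr (-a)"
    if a: "0 < a" "a < m" for a
  proof -
    define p where "p = a * Lc / L"
    define q where "q = a * Ls / L"
    have aL: "a < L" "a \<le> 1" using a unfolding m_def L_def by auto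
    have p: "0 \<le> p" "p < Lc" using a aL L Lc unfolding p_def by (auto simp: field_simps)
    have q: "0 \<le> q" "q < Ls" using a aL L Ls unfolding q_def by (auto simp: field_simps)
    have "p + q = a * L / L" unfolding p_def q_def L_def by (simp add: add_divide_distrib distrib_left)
    then have pq: "p + q = a" using L by simp
    define CA where "CA = (Lc powr Lc / Gamma Lc) / (Lc - p) + 1"
    define CB where "CB = (Ls powr Ls / Gamma Ls) / (Ls - q) + 1"
    have CA: "CA > 0" using Lc p unfolding CA_def by (simp add: add_pos_nonneg)
    have CB: "CB > 0" using Ls q unfolding CB_def by (simp add: add_pos_nonneg)
    have IA: "(\<integral>\<^sup>+x. fX x * ennreal (x powr (-p)) \<partial>lborel) \<le> ennreal CA"
      unfolding fX_def CA_def by (rule moment_upper[OF Lc p assms(1) assms(5)])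
    have IB: "(\<integral>\<^sup>+y. fY y * ennreal (y powr (-q)) \<partial>lborel) \<le> ennreal CB"
      unfolding fY_def CB_def by (rule moment_upper[OF Ls q assms(1) assms(6)])
    have "enn2real (N \<rho>) \<le> (CA * CB) * \<rho> powr (-a)" if \<rho>: "\<rho> \<ge> 1" for \<rho>
    proof (rule enn2real_leI)
      show "0 \<le> CA * CB * \<rho> powr - a" using CA CB by simp
      have "N \<rho> \<le> (\<integral>\<^sup>+z. ennreal (\<rho> powr (-a)) * ((fX (fst z) * ennreal (fst z powr (-p))) * (fY (snd z) * ennreal (snd z powr (-q)))) \<partial>(lborel \<Otimes>\<^sub>M lborel))"
        unfolding Nj
      proof (rule nn_integral_mono)
        fix z :: "real \<times> real"
        obtain x y where z: "z = (x, y)" by (cases z)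
        show "fX (fst z) * fY (snd z) * ennreal (1 / (1 + \<rho> * fst z + \<rho> * snd z)) \<le>
          ennreal (\<rho> powr (-a)) * ((fX (fst z) * ennreal (fst z powr (-p))) * (fY (snd z) * ennreal (snd z powr (-q))))"
        proof (cases "x \<le> 0 \<or> y \<le> 0")
          case True then show ?thesis using fX0 fY0 by (auto simp: z)
        next
          case False
          then have xy: "x > 0" "y > 0" by auto
          have rb: "1 / (1 + \<rho> * x + \<rho> * y) \<le> \<rho> powr (-a) * x powr (-p) * y powr (-q)"
            by (rule real_bound) (use \<rho> xy a aL p q pq in auto)
          have e1: "ennreal (\<rho> powr (-a) * x powr (-p) * y powr (-q)) = ennreal (\<rho> powr (-a) * x powr (-p)) * ennreal (y powr (-q))"
            by (rule ennreal_mult) auto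
          have e2: "ennreal (\<rho> powr (-a) * x powr (-p)) = ennreal (\<rho> powr (-a)) * ennreal (x powr (-p))"
            by (rule ennreal_mult) auto
          have "ennreal (1 / (1 + \<rho> * x + \<rho> * y)) \<le> ennreal (\<rho> powr (-a)) * ennreal (x powr (-p)) * ennreal (y powr (-q))"
            using ennreal_leI[OF rb] unfolding e1 e2 .
          then have "fX x * fY y * ennreal (1 / (1 + \<rho> * x + \<rho> * y)) \<le> fX x * fY y * (ennreal (\<rho> powr (-a)) * ennreal (x powr (-p)) * ennreal (y powr (-q)))"
            by (rule mult_left_mono) simp
          then show ?thesis by (simp add: z ac_simps)
        qed
      qed
      also have "\<dots> = ennreal (\<rho> powr (-a)) * (\<integral>\<^sup>+z. (fX (fst z) * ennreal (fst z powr (-p))) * (fY (snd z) * ennreal (snd z powr (-q))) \<partial>(lborel \<Otimes>\<^sub>M lborel))"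
        by (rule nn_integral_cmult) measurable
      also have "\<dots> = ennreal (\<rho> powr (-a)) * ((\<integral>\<^sup>+x. fX x * ennreal (x powr (-p)) \<partial>lborel) * (\<integral>\<^sup>+y. fY y * ennreal (y powr (-q)) \<partial>lborel))"
        by (subst nn_prod) auto
      also have "\<dots> \<le> ennreal (\<rho> powr (-a)) * (ennreal CA * ennreal CB)"
        by (intro mult_left_mono mult_mono IA IB) auto
      also have "\<dots> = ennreal (CA * CB * \<rho> powr (-a))"
        using CA CB by (simp add: ennreal_mult mult_ac)
      finally show "N \<rho> \<le> ennreal (CA * CB * \<rho> powr (-a))" .
    qed
    then show ?thesis using CA CB by (intro exI[of _ "CA * CB"]) auto
  qed
  obtain c where c: "c > 0" "\<And>\<rho>. \<rho> \<ge> 1 \<Longrightarrow> c * \<rho> powr (-m) \<le> enn2real (N \<rho>)"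
    using lowb by blast
  have epos: "enn2real (N \<rho>) > 0" if "\<rho> \<ge> 1" for \<rho>
  proof -
    have "0 < c * \<rho> powr (-m)" using c that by simp
    then show ?thesis using c(2)[OF that] by linarith
  qed
  have lnbig: "t < ln \<rho>" if "\<rho> > exp t" for t \<rho> :: real
  proof -
    have "\<rho> > 0" using that exp_gt_zero[of t] by linarith
    then have "exp t < exp (ln \<rho>)" using that by simp
    then show ?thesis by simp
  qed
  show ?thesis
    unfolding m_def[symmetric]
  proof (rule order_tendstoI)
    fix a assume a: "a < m"
    define a' where "a' = (max a 0 + m) / 2"
    have a': "0 < a'" "a' < m" "a < a'" using a m unfolding a'_def by (auto simp: max_def)
    obtain C where C: "C > 0" "\<And>\<rho>. \<rho> \<ge> 1 \<Longrightarrow> enn2real (N \<rho>) \<le> C * \<rho> powr (-a')"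
      using upb[OF a'(1,2)] by blast
    show "\<forall>\<^sub>F \<rho> in at_top. a < - ln (prob_space.expectation M (\<lambda>\<omega>. 1 / (1 + \<rho> * H0 \<omega> + \<rho> * \<Gamma>0 \<omega>))) / ln \<rho>"
    proof -
      have "eventually (\<lambda>\<rho>. \<rho> > max 1 (exp (\<bar>ln C\<bar> / (a' - a)))) at_top" by (rule eventually_gt_at_top)
      then show ?thesis
      proof eventually_elim
        case (elim \<rho>)
        have \<rho>: "\<rho> \<ge> 1" "\<rho> > 0" using elim by auto
        have "\<bar>ln C\<bar> / (a' - a) < ln \<rho>" by (rule lnbig) (use elim in auto)
        then have big: "\<bar>ln C\<bar> < (a' - a) * ln \<rho>" using a' by (simp add: pos_divide_less_eq mult.commute)
        have lp: "ln \<rho> > 0" using big a' by (smt (verit) mult_nonneg_nonpos)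
        define e where "e = enn2real (N \<rho>)"
        have E: "prob_space.expectation M (\<lambda>\<omega>. 1 / (1 + \<rho> * H0 \<omega> + \<rho> * \<Gamma>0 \<omega>)) = e"
          unfolding e_def using \<rho> by (intro E_eq) auto
        have ep: "e > 0" unfolding e_def using epos \<rho> by auto
        have "ln e \<le> ln (C * \<rho> powr (-a'))" using C(2)[OF \<rho>(1)] C \<rho> ep unfolding e_def by simp
        then have le: "ln e \<le> ln C - a' * ln \<rho>" using C \<rho> by (simp add: ln_mult)
        have "a * ln \<rho> < - ln e" using le big by (simp add: algebra_simps)
        then show ?case unfolding E by (subst pos_less_divide_eq[OF lp]) simp
      qed
    qed
  next
    fix b assume b: "m < b"
    show "\<forall>\<^sub>F \<rho> in at_top. - ln (prob_space.expectation M (\<lambda>\<omega>. 1 / (1 + \<rho> * H0 \<omega> + \<rho> * \<Gamma>0 \<omega>))) / ln \<rho> < b"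
    proof -
      have "eventually (\<lambda>\<rho>. \<rho> > max 1 (exp (\<bar>ln c\<bar> / (b - m)))) at_top" by (rule eventually_gt_at_top)
      then show ?thesis
      proof eventually_elim
        case (elim \<rho>)
        have \<rho>: "\<rho> \<ge> 1" "\<rho> > 0" using elim by auto
        have "\<bar>ln c\<bar> / (b - m) < ln \<rho>" by (rule lnbig) (use elim in auto)
        then have big: "\<bar>ln c\<bar> < (b - m) * ln \<rho>" using b by (simp add: pos_divide_less_eq mult.commute)
        have lp: "ln \<rho> > 0" using big b by (smt (verit) mult_nonneg_nonpos)
        define e where "e = enn2real (N \<rho>)"
        have E: "prob_space.expectation M (\<lambda>\<omega>. 1 / (1 + \<rho> * H0 \<omega> + \<rho> * \<Gamma>0 \<omega>)) = e"
          unfolding e_def using \<rho> by (intro E_eq) auto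
        have ep: "e > 0" unfolding e_def using epos \<rho> by auto
        have cp: "0 < c * \<rho> powr (-m)" using c \<rho> by simp
        have "ln (c * \<rho> powr (-m)) \<le> ln e" using c(2)[OF \<rho>(1)] cp ep unfolding e_def by simp
        then have le: "ln c - m * ln \<rho> \<le> ln e" using c \<rho> by (simp add: ln_mult)
        have "- ln e < b * ln \<rho>" using le big by (simp add: algebra_simps)
        then show ?case unfolding E by (subst pos_divide_less_eq[OF lp]) simp
      qed
    qed
  qed
qed

end
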